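(* (a) For an integer $k\ge2$, let $P_k(x)=-\left(x+\frac{k-1}{2}\right)\left(x-\frac{k-1}{2}\right)\prod_{i=1}^{k-1}\left(x-\left(i-\frac k2\right)\right)^2$, $r_0=\frac{1-k}{2}$, $r_1=\frac{k-1}{2}$, $Z_k=(X_k,Y_k)$ with $X_k(x,y)=(1,P_k'(x))$ for $y\ge0$, $Y_k(x,y)=(-1,P_k'(x))$ for $y\le0$, and $\Lambda_k=\{(x,P_k(x)):r_0\le x\le r_1\}\cup\{(x,-P_k(x)):r_0\le x\le r_1\}$. Then $\Lambda_k$ is an invariant set for $Z_k$. (b) Let $Z_\infty$ have $X_\infty(x,y)=(1,2\sin(2\pi x))$ for $y\ge0$, $Y_\infty(x,y)=(-1,2\sin(2\pi x))$ for $y\le0$, and $\Lambda_\infty=\{(x,\pm P_\infty(x)):x\in\mathbb{R}\}$ with $P_\infty(x)=\frac{1-\cos(2\pi x)}{\pi}$. Then $\Lambda_\infty$ is an invariant set for $Z_\infty$.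
   Context: Switching manifold $\Sigma=\{y=0\}=f^{-1}(0)$, $f(x,y)=y$; a PSVF $Z=(X,Y)$ uses $X$ on $\{y\ge0\}$, $Y$ on $\{y\le0\}$. With $Wf=\langle\nabla f,W\rangle$, $W^2f=\langle\nabla(Wf),W\rangle$: crossing region $\Sigma^c=\{Xf\cdot Yf>0\}$ ($\Sigma^{c+}$ both $>0$, $\Sigma^{c-}$ both $<0$), sliding $\Sigma^s=\{Xf<0<Yf\}$, escaping $\Sigma^e=\{Yf<0<Xf\}$, sliding field $Z^T=(Yf\,X-Xf\,Y)/(Yf-Xf)$ on their closure. Tangential singularities: points of $\Sigma$ with $Xf=0$ or $Yf=0$; singular if invisible for both fields ($X^2f<0$ and $Y^2f>0$), regular otherwise. Local trajectories (Filippov convention): off $\Sigma$ follow $X$ or $Y$; through $\Sigma^{c+}$ follow $Y$ for $t\le0$ and $X$ for $t\ge0$ (reversed for $\Sigma^{c-}$); through $\Sigma^e$ follow $Z^T$ for $t\le0$ and one of $X,Y,Z^T$ for $t\ge0$ (reversed for $\Sigma^s$); through a regular tangency follow one of the flows of $X,Y,Z^T$ for $t\le0$ and one of them for $t\ge0$; singular tangencies are stationary. A global trajectory is a map $\gamma:\mathbb{R}\to\mathbb{R}^2$ concatenating orientation-preserving local trajectories $\sigma_i$ on $[t_i,t_{i+1}]$, $i\in\mathbb{Z}$, with $\sigma_i(t_{i+1})=\sigma_{i+1}(t_{i+1})$ and $t_i\to\pm\infty$. A set $\Lambda$ is invariant for $Z$ if every global trajectory $\gamma$ of $Z$ with $\gamma(0)\in\Lambda$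 satisfies $\gamma(\mathbb{R})\subset\Lambda$. *)

theory Defs
  imports "HOL-Analysis.Analysis"
begin

type_synonym R2 = "real \<times> real"
type_synonym vf = "R2 \<Rightarrow> R2"

definition sw_f :: "R2 \<Rightarrow> real" where "sw_f p = snd p"
definition Sigma :: "R2 set" where "Sigma = {p. sw_f p = 0}"

text \<open>Lie derivatives: Wf = <grad f, W>, W^2 f = <grad (Wf), W>.\<close>
definition Lf :: "vf \<Rightarrow> R2 \<Rightarrow> real" where
  "Lf W p = snd (W p)"   (* grad f = (0,1) *)
definition L2f :: "vf \<Rightarrow> R2 \<Rightarrow> real" where
  "L2f W p = frechet_derivative (Lf W) (at p) (W p)"

definition crossing_plus :: "vf \<Rightarrow> vf \<Rightarrow> R2 set" where
  "crossing_plus X Y = {p \<in> Sigma. Lf X p > 0 \<and> Lf Y p > 0}"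
definition crossing_minus :: "vf \<Rightarrow> vf \<Rightarrow> R2 set" where
  "crossing_minus X Y = {p \<in> Sigma. Lf X p < 0 \<and> Lf Y p < 0}"
definition sliding :: "vf \<Rightarrow> vf \<Rightarrow> R2 set" where
  "sliding X Y = {p \<in> Sigma. Lf X p < 0 \<and> 0 < Lf Y p}"
definition escaping :: "vf \<Rightarrow> vf \<Rightarrow> R2 set" where
  "escaping X Y = {p \<in> Sigma. Lf Y p < 0 \<and> 0 < Lf X p}"

definition sliding_field :: "vf \<Rightarrow> vf \<Rightarrow> vf" where
  "sliding_field X Y p =
     (1 / (Lf Y p - Lf X p)) *\<^sub>R (Lf Y p *\<^sub>R X p - Lf X p *\<^sub>R Y p)"

definition tangency :: "vf \<Rightarrow> vf \<Rightarrow> R2 set" where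
  "tangency X Y = {p \<in> Sigma. Lf X p = 0 \<or> Lf Y p = 0}"
definition singular_tangency :: "vf \<Rightarrow> vf \<Rightarrow> R2 set" where
  "singular_tangency X Y = {p \<in> tangency X Y. L2f X p < 0 \<and> L2f Y p > 0}"
definition regular_tangency :: "vf \<Rightarrow> vf \<Rightarrow> R2 set" where
  "regular_tangency X Y = tangency X Y - singular_tangency X Y"

definition solution_in :: "vf \<Rightarrow> R2 set \<Rightarrow> (real \<Rightarrow> R2) \<Rightarrow> real \<Rightarrow> real \<Rightarrow> bool" where
  "solution_in W S \<sigma> a b \<longleftrightarrow>
     (\<forall>t\<in>{a..b}. (\<sigma> has_vector_derivative W (\<sigma> t)) (at t within {a..b}) \<and> \<sigma> t \<in> S)"

datatype flow_choice = FX | FY | FT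

definition follows :: "vf \<Rightarrow> vf \<Rightarrow> flow_choice \<Rightarrow> (real \<Rightarrow> R2) \<Rightarrow> real \<Rightarrow> real \<Rightarrow> bool" where
  "follows X Y F \<sigma> a b = (case F of
       FX \<Rightarrow> solution_in X {p. sw_f p \<ge> 0} \<sigma> a b
     | FY \<Rightarrow> solution_in Y {p. sw_f p \<le> 0} \<sigma> a b
     | FT \<Rightarrow> solution_in (sliding_field X Y) (closure (sliding X Y \<union> escaping X Y)) \<sigma> a b)"

text \<open>Local trajectory (Filippov convention) on [a,b] passing at time tau through p = sigma tau.\<close>
definition local_trajectory :: "vf \<Rightarrow> vf \<Rightarrow> (real \<Rightarrow> R2) \<Rightarrow> real \<Rightarrow> real \<Rightarrow> bool" where
  "local_trajectory X Y \<sigma> a b \<longleftrightarrow> (\<exists>\<tau>\<in>{a..b}.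
     (sw_f (\<sigma> \<tau>) > 0 \<and> follows X Y FX \<sigma> a b) \<or>
     (sw_f (\<sigma> \<tau>) < 0 \<and> follows X Y FY \<sigma> a b) \<or>
     (\<sigma> \<tau> \<in> crossing_plus X Y \<and> follows X Y FY \<sigma> a \<tau> \<and> follows X Y FX \<sigma> \<tau> b) \<or>
     (\<sigma> \<tau> \<in> crossing_minus X Y \<and> follows X Y FX \<sigma> a \<tau> \<and> follows X Y FY \<sigma> \<tau> b) \<or>
     (\<sigma> \<tau> \<in> escaping X Y \<and> follows X Y FT \<sigma> a \<tau> \<and> (\<exists>F. follows X Y F \<sigma> \<tau> b)) \<or>
     (\<sigma> \<tau> \<in> sliding X Y \<and> (\<exists>F. follows X Y F \<sigma> a \<tau>) \<and> follows X Y FT \<sigma> \<tau> b) \<or>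
     (\<sigma> \<tau> \<in> regular_tangency X Y \<and> (\<exists>F. follows X Y F \<sigma> a \<tau>) \<and> (\<exists>G. follows X Y G \<sigma> \<tau> b)) \<or>
     (\<sigma> \<tau> \<in> singular_tangency X Y \<and> (\<forall>t\<in>{a..b}. \<sigma> t = \<sigma> \<tau>)))"

definition global_trajectory :: "vf \<Rightarrow> vf \<Rightarrow> (real \<Rightarrow> R2) \<Rightarrow> bool" where
  "global_trajectory X Y \<gamma> \<longleftrightarrow> (\<exists>(t :: int \<Rightarrow> real) (\<sigma> :: int \<Rightarrow> real \<Rightarrow> R2).
     (\<forall>i. t i < t (i + 1)) \<and>
     filterlim t at_top at_top \<and> filterlim t at_bot at_bot \<and>
     (\<forall>i. local_trajectory X Y (\<sigma> i) (t i) (t (i + 1))) \<and>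
     (\<forall>i. \<sigma> i (t (i + 1)) = \<sigma> (i + 1) (t (i + 1))) \<and>
     (\<forall>i. \<forall>s\<in>{t i..t (i + 1)}. \<gamma> s = \<sigma> i s))"

definition invariant_set :: "vf \<Rightarrow> vf \<Rightarrow> R2 set \<Rightarrow> bool" where
  "invariant_set X Y \<Lambda> \<longleftrightarrow>
     (\<forall>\<gamma>. global_trajectory X Y \<gamma> \<and> \<gamma> 0 \<in> \<Lambda> \<longrightarrow> range \<gamma> \<subseteq> \<Lambda>)"

definition Pk :: "nat \<Rightarrow> real \<Rightarrow> real" where
  "Pk k x = - (x + (real k - 1) / 2) * (x - (real k - 1) / 2) *
     (\<Prod>i\<in>{1..k-1}. (x - (real i - real k / 2)) ^ 2)"
definition Xk :: "nat \<Rightarrow> vf" where "Xk k p = (1, deriv (Pk k) (fst p))"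
definition Yk :: "nat \<Rightarrow> vf" where "Yk k p = (-1, deriv (Pk k) (fst p))"
definition Lambdak :: "nat \<Rightarrow> R2 set" where
  "Lambdak k = {(x, Pk k x) | x. (1 - real k) / 2 \<le> x \<and> x \<le> (real k - 1) / 2}
             \<union> {(x, - Pk k x) | x. (1 - real k) / 2 \<le> x \<and> x \<le> (real k - 1) / 2}"

definition Pinf :: "real \<Rightarrow> real" where "Pinf x = (1 - cos (2 * pi * x)) / pi"
definition Xinf :: vf where "Xinf p = (1, 2 * sin (2 * pi * fst p))"
definition Yinf :: vf where "Yinf p = (-1, 2 * sin (2 * pi * fst p))"
definition Lambdainf :: "R2 set" where
  "Lambdainf = {(x, Pinf x) | x. True} \<union> {(x, - Pinf x) | x. True}"

end

theory Submission imports Defs begin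

lemma vd_fst:
  assumes "(f has_vector_derivative v) F"
  shows "((\<lambda>t. fst (f t)) has_real_derivative fst v) F"
proof -
  have "((\<lambda>t. fst (f t)) has_derivative (\<lambda>h. fst (h *\<^sub>R v))) F"
    using has_derivative_fst[OF assms[unfolded has_vector_derivative_def]] .
  moreover have "(\<lambda>h. fst (h *\<^sub>R v)) = (*) (fst v)" by (rule ext) simp
  ultimately show ?thesis by (simp add: has_field_derivative_def)
qed

lemma vd_snd:
  assumes "(f has_vector_derivative v) F"
  shows "((\<lambda>t. snd (f t)) has_real_derivative snd v) F"
proof -
  have "((\<lambda>t. snd (f t)) has_derivative (\<lambda>h. snd (h *\<^sub>R v))) F"
    using has_derivative_snd[OF assms[unfolded has_vector_derivative_def]] .
  moreover have "(\<lambda>h. snd (h *\<^sub>R v)) = (*) (snd v)" by (rule ext) simp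
  ultimately show ?thesis by (simp add: has_field_derivative_def)
qed

definition Lam :: "(real \<Rightarrow> real) \<Rightarrow> R2 set" where
  "Lam P = {(x, P x) | x. P x \<ge> 0} \<union> {(x, - P x) | x. P x \<ge> 0}"

lemma sol_const:
  assumes P: "\<And>x. (P has_real_derivative D x) (at x)"
  and sol: "solution_in (\<lambda>p. (e, D (fst p))) S \<sigma> a b"
  and c: "c \<in> {a..b}" and s: "s \<in> {a..b}"
  shows "e * snd (\<sigma> s) - P (fst (\<sigma> s)) = e * snd (\<sigma> c) - P (fst (\<sigma> c))"
proof -
  have "\<exists>k. \<forall>t\<in>{a..b}. e * snd (\<sigma> t) - P (fst (\<sigma> t)) = k"
  proof (rule has_field_derivative_zero_constant)
    fix t assume t: "t \<in> {a..b}"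
    have d: "(\<sigma> has_vector_derivative (e, D (fst (\<sigma> t)))) (at t within {a..b})"
      using sol t unfolding solution_in_def by auto
    have d1: "((\<lambda>t. fst (\<sigma> t)) has_real_derivative e) (at t within {a..b})"
      using vd_fst[OF d] by simp
    have d2: "((\<lambda>t. snd (\<sigma> t)) has_real_derivative D (fst (\<sigma> t))) (at t within {a..b})"
      using vd_snd[OF d] by simp
    have d3: "((\<lambda>t. P (fst (\<sigma> t))) has_real_derivative D (fst (\<sigma> t)) * e) (at t within {a..b})"
      using DERIV_chain2[OF P d1] .
    have "((\<lambda>t. e * snd (\<sigma> t) - P (fst (\<sigma> t))) has_real_derivative
        e * D (fst (\<sigma> t)) - D (fst (\<sigma> t)) * e) (at t within {a..b})"
      by (intro DERIV_diff DERIV_cmult d2 d3)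
    then show "((\<lambda>t. e * snd (\<sigma> t) - P (fst (\<sigma> t))) has_real_derivative 0) (at t within {a..b})"
      by (simp add: mult.commute)
  qed simp
  then show ?thesis
    using c s by metis
qed

lemma follows_Lam:
  assumes P: "\<And>x. (P has_real_derivative D x) (at x)"
  and X: "X = (\<lambda>p. (1, D (fst p)))" and Y: "Y = (\<lambda>p. (-1, D (fst p)))"
  and f: "follows X Y F \<sigma> a b"
  and c: "c \<in> {a..b}" and Lc: "\<sigma> c \<in> Lam P" and s: "s \<in> {a..b}"
  shows "\<sigma> s \<in> Lam P"
proof (cases F)
  case FX
  have sol: "solution_in (\<lambda>p. (1, D (fst p))) {p. sw_f p \<ge> 0} \<sigma> a b"
    using f FX X by (simp add: follows_def)
  have eq: "1 * snd (\<sigma> s) - P (fst (\<sigma> s)) = 1 * snd (\<sigma> c) - P (fst (\<sigma> c))"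
    using sol_const[OF P sol c s] .
  have "snd (\<sigma> c) \<ge> 0" "snd (\<sigma> s) \<ge> 0" using sol c s by (auto simp: solution_in_def sw_f_def)
  moreover have "snd (\<sigma> c) = P (fst (\<sigma> c)) \<or> (snd (\<sigma> c) = - P (fst (\<sigma> c)) \<and> P (fst (\<sigma> c)) \<ge> 0)"
    using Lc by (auto simp: Lam_def)
  ultimately have "snd (\<sigma> s) = P (fst (\<sigma> s))" using eq by auto
  then have "\<sigma> s = (fst (\<sigma> s), P (fst (\<sigma> s)))" "P (fst (\<sigma> s)) \<ge> 0"
    using \<open>snd (\<sigma> s) \<ge> 0\<close> by (metis prod.collapse, linarith)
  then show ?thesis unfolding Lam_def by blast
next
  case FY
  have sol: "solution_in (\<lambda>p. (-1, D (fst p))) {p. sw_f p \<le> 0} \<sigma> a b"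
    using f FY Y by (simp add: follows_def)
  have eq: "-1 * snd (\<sigma> s) - P (fst (\<sigma> s)) = -1 * snd (\<sigma> c) - P (fst (\<sigma> c))"
    using sol_const[OF P sol c s] .
  have "snd (\<sigma> c) \<le> 0" "snd (\<sigma> s) \<le> 0" using sol c s by (auto simp: solution_in_def sw_f_def)
  moreover have "snd (\<sigma> c) = - P (fst (\<sigma> c)) \<or> (snd (\<sigma> c) = P (fst (\<sigma> c)) \<and> P (fst (\<sigma> c)) \<ge> 0)"
    using Lc by (auto simp: Lam_def)
  ultimately have "snd (\<sigma> s) = - P (fst (\<sigma> s))" using eq by auto
  then have "\<sigma> s = (fst (\<sigma> s), - P (fst (\<sigma> s)))" "P (fst (\<sigma> s)) \<ge> 0"
    using \<open>snd (\<sigma> s) \<le> 0\<close> by (metis prod.collapse, linarith)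
  then show ?thesis unfolding Lam_def by blast
next
  case FT
  have "sliding X Y = {}" "escaping X Y = {}"
    by (auto simp: sliding_def escaping_def Lf_def X Y)
  then show ?thesis using f FT c by (auto simp: follows_def solution_in_def)
qed


lemma split_Lam:
  assumes P: "\<And>x. (P has_real_derivative D x) (at x)"
  and X: "X = (\<lambda>p. (1, D (fst p)))" and Y: "Y = (\<lambda>p. (-1, D (fst p)))"
  and f1: "follows X Y F \<sigma> a \<tau>" and f2: "follows X Y G \<sigma> \<tau> b" and tau: "\<tau> \<in> {a..b}"
  and c: "c \<in> {a..b}" and Lc: "\<sigma> c \<in> Lam P" and s: "s \<in> {a..b}"
  shows "\<sigma> s \<in> Lam P"
proof (cases "c \<le> \<tau>")
  case True
  have "\<sigma> \<tau> \<in> Lam P" using follows_Lam[OF P X Y f1 _ Lc] True c tau by auto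
  moreover have "\<forall>u\<in>{a..\<tau>}. \<sigma> u \<in> Lam P" using follows_Lam[OF P X Y f1 _ Lc] True c by auto
  ultimately show ?thesis using follows_Lam[OF P X Y f2, of \<tau>] tau s by force
next
  case False
  have "\<sigma> \<tau> \<in> Lam P" using follows_Lam[OF P X Y f2 _ Lc] False c tau by auto
  moreover have "\<forall>u\<in>{\<tau>..b}. \<sigma> u \<in> Lam P" using follows_Lam[OF P X Y f2 _ Lc] False c by auto
  ultimately show ?thesis using follows_Lam[OF P X Y f1, of \<tau>] tau s by force
qed

lemma local_Lam:
  assumes P: "\<And>x. (P has_real_derivative D x) (at x)"
  and X: "X = (\<lambda>p. (1, D (fst p)))" and Y: "Y = (\<lambda>p. (-1, D (fst p)))"
  and lt: "local_trajectory X Y \<sigma> a b"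
  and c: "c \<in> {a..b}" and Lc: "\<sigma> c \<in> Lam P" and s: "s \<in> {a..b}"
  shows "\<sigma> s \<in> Lam P"
proof -
  have e: "sliding X Y = {}" "escaping X Y = {}"
    by (auto simp: sliding_def escaping_def Lf_def X Y)
  obtain \<tau> where tau: "\<tau> \<in> {a..b}" and
    cs: "follows X Y FX \<sigma> a b \<or> follows X Y FY \<sigma> a b \<or>
      (\<exists>F G. follows X Y F \<sigma> a \<tau> \<and> follows X Y G \<sigma> \<tau> b) \<or>
      (\<forall>t\<in>{a..b}. \<sigma> t = \<sigma> \<tau>)"
    using lt e unfolding local_trajectory_def by blast
  from cs show ?thesis
  proof (elim disjE exE conjE)
    assume "follows X Y FX \<sigma> a b" then show ?thesis using follows_Lam[OF P X Y, of FX \<sigma> a b c s] c Lc s by blast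
  next
    assume "follows X Y FY \<sigma> a b" then show ?thesis using follows_Lam[OF P X Y, of FY \<sigma> a b c s] c Lc s by blast
  next
    fix F G assume "follows X Y F \<sigma> a \<tau>" "follows X Y G \<sigma> \<tau> b"
    then show ?thesis using split_Lam[OF P X Y, of F \<sigma> a \<tau> G b c s] tau c Lc s by blast
  next
    assume "\<forall>t\<in>{a..b}. \<sigma> t = \<sigma> \<tau>" then show ?thesis using c Lc s by metis
  qed
qed

lemma cover:
  fixes t :: "int \<Rightarrow> real"
  assumes mono: "\<And>i. t i < t (i + 1)"
  and top: "filterlim t at_top at_top" and bot: "filterlim t at_bot at_bot"
  shows "\<exists>i. t i \<le> s \<and> s \<le> t (i + 1)"
proof -
  have mono': "t i \<le> t j" if "i \<le> j" for i j
  proof -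
    have "\<forall>n. t i \<le> t (i + int n)"
    proof
      fix n show "t i \<le> t (i + int n)"
      proof (induction n)
        case (Suc n)
        have e: "i + int (Suc n) = (i + int n) + 1" by simp
        have "t (i + int n) \<le> t (i + int (Suc n))" unfolding e using mono[of "i + int n"] by linarith
        then show ?case using Suc by linarith
      qed simp
    qed
    then show ?thesis using that by (metis le_add_diff_inverse zle_iff_zadd)
  qed
  have "eventually (\<lambda>j. t j \<le> s) at_bot" using bot by (simp add: filterlim_at_bot)
  then obtain j0 where j0: "t j0 \<le> s" by (meson eventually_at_bot_linorder order_refl)
  have "eventually (\<lambda>j. t j > s) at_top" using top by (simp add: filterlim_at_top_dense)
  then obtain j1 where j1: "t j1 > s" by (meson eventually_at_top_linorder order_refl)
  have j01: "j0 \<le> j1" using j0 j1 mono' by (meson linorder_not_le order.strict_trans1 order_less_le)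
  have "\<forall>j. t j \<le> s \<and> s < t (j + int n) \<longrightarrow> (\<exists>i. t i \<le> s \<and> s \<le> t (i + 1))" for n
  proof (induction n)
    case 0 then show ?case by auto
  next
    case (Suc n)
    show ?case
    proof (intro allI impI)
      fix j assume h: "t j \<le> s \<and> s < t (j + int (Suc n))"
      show "\<exists>i. t i \<le> s \<and> s \<le> t (i + 1)"
      proof (cases "t (j + 1) \<le> s")
        case True
        have e: "j + int (Suc n) = (j + 1) + int n" by simp
        show ?thesis using Suc[rule_format, of "j+1"] h True unfolding e by blast
      next
        case False then show ?thesis using h by force
      qed
    qed
  qed
  then show ?thesis using j0 j1 j01 by (metis le_add_diff_inverse zle_iff_zadd)
qed

lemma generic_inv:
  assumes P: "\<And>x. (P has_real_derivative D x) (at x)"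
  and X: "X = (\<lambda>p. (1, D (fst p)))" and Y: "Y = (\<lambda>p. (-1, D (fst p)))"
  shows "invariant_set X Y (Lam P)"
  unfolding invariant_set_def
proof (intro allI impI)
  fix \<gamma> assume h: "global_trajectory X Y \<gamma> \<and> \<gamma> 0 \<in> Lam P"
  then obtain t :: "int \<Rightarrow> real" and \<sigma> :: "int \<Rightarrow> real \<Rightarrow> R2" where mono: "\<And>i. t i < t (i + 1)"
    and top: "filterlim t at_top at_top" and bot: "filterlim t at_bot at_bot"
    and lt: "\<And>i. local_trajectory X Y (\<sigma> i) (t i) (t (i + 1))"
    and junc: "\<And>i. \<sigma> i (t (i + 1)) = \<sigma> (i + 1) (t (i + 1))"
    and gs0: "\<forall>i. \<forall>s\<in>{t i..t (i + 1)}. \<gamma> s = \<sigma> i s"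
    unfolding global_trajectory_def by blast
  have gs: "\<And>i s. s\<in>{t i..t (i + 1)} \<Longrightarrow> \<gamma> s = \<sigma> i s" using gs0 by blast
  have loc: "\<And>i c s. c \<in> {t i..t (i+1)} \<Longrightarrow> \<sigma> i c \<in> Lam P \<Longrightarrow> s \<in> {t i..t (i+1)} \<Longrightarrow> \<sigma> i s \<in> Lam P"
    using local_Lam[OF P X Y lt] by blast
  define Pc where "Pc i \<longleftrightarrow> (\<forall>s\<in>{t i..t (i+1)}. \<sigma> i s \<in> Lam P)" for i
  obtain i0 where i0: "t i0 \<le> 0 \<and> 0 \<le> t (i0 + 1)" using cover[OF mono top bot] by blast
  have P0: "Pc i0" unfolding Pc_def using loc[of 0 i0] i0 gs[of 0 i0] h by auto
  have up: "Pc (i0 + int n)" for n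
  proof (induction n)
    case 0 then show ?case using P0 by simp
  next
    case (Suc n)
    let ?j = "i0 + int n"
    have "\<sigma> ?j (t (?j+1)) \<in> Lam P" using Suc mono[of ?j] unfolding Pc_def by auto
    then have "\<sigma> (?j+1) (t (?j+1)) \<in> Lam P" using junc by simp
    then have "Pc (?j+1)" unfolding Pc_def using loc[of "t (?j+1)" "?j+1"] mono[of "?j+1"] by auto
    moreover have "?j + 1 = i0 + int (Suc n)" by simp
    ultimately show ?case by metis
  qed
  have down: "Pc (i0 - int n)" for n
  proof (induction n)
    case 0 then show ?case using P0 by simp
  next
    case (Suc n)
    let ?j = "i0 - int n - 1"
    have "\<sigma> (?j+1) (t (?j+1)) \<in> Lam P" using Suc mono[of "?j+1"] unfolding Pc_def by auto
    then have "\<sigma> ?j (t (?j+1)) \<in> Lam P" using junc[of ?j] by simp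
    then have "Pc ?j" unfolding Pc_def using loc[of "t (?j+1)" "?j"] mono[of "?j"] by auto
    then show ?case by (simp add: algebra_simps)
  qed
  have all: "Pc i" for i
  proof (cases "i \<ge> i0")
    case True then show ?thesis using up[of "nat (i - i0)"] by simp
  next
    case False then show ?thesis using down[of "nat (i0 - i)"] by simp
  qed
  show "range \<gamma> \<subseteq> Lam P"
  proof
    fix y assume "y \<in> range \<gamma>"
    then obtain s where y: "y = \<gamma> s" by auto
    obtain i where "t i \<le> s \<and> s \<le> t (i + 1)" using cover[OF mono top bot] by blast
    then show "y \<in> Lam P" using all[of i] gs[of s i] y unfolding Pc_def by auto
  qed
qed


lemma diff_prod:
  fixes f :: "nat \<Rightarrow> real \<Rightarrow> real"
  shows "finite I \<Longrightarrow> (\<And>i. i\<in>I \<Longrightarrow> f i differentiable (at y)) \<Longrightarrow> (\<lambda>x. \<Prod>i\<in>I. f i x) differentiable (at y)"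
  by (induction I rule: finite_induct) (auto intro: differentiable_mult)

lemma Pk_diff: "(Pk k has_real_derivative deriv (Pk k) x) (at x)"
proof -
  have "Pk k differentiable at x" unfolding Pk_def
    by (intro differentiable_mult differentiable_minus differentiable_add differentiable_diff
       differentiable_power diff_prod differentiable_ident differentiable_const) auto
  then show ?thesis using DERIV_deriv_iff_real_differentiable by blast
qed

lemma Pk_sign:
  assumes k: "k \<ge> 2"
  shows "Pk k x \<ge> 0 \<longleftrightarrow> (1 - real k) / 2 \<le> x \<and> x \<le> (real k - 1) / 2"
proof -
  have pr: "(\<Prod>i\<in>{1..k-1}. (x - (real i - real k / 2)) ^ 2) \<ge> 0"
    by (intro prod_nonneg) auto
  show ?thesis
  proof
    assume "Pk k x \<ge> 0"
    show "(1 - real k) / 2 \<le> x \<and> x \<le> (real k - 1) / 2"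
    proof (rule ccontr)
      assume out: "\<not> ?thesis"
      have "(\<Prod>i\<in>{1..k-1}. (x - (real i - real k / 2)) ^ 2) > 0"
      proof (intro prod_pos)
        fix i assume i: "i \<in> {1..k-1}"
        then have "real i \<ge> 1" "real i \<le> real k - 1" using k by auto
        then have "x - (real i - real k / 2) \<noteq> 0" using out by auto
        then show "(x - (real i - real k / 2)) ^ 2 > 0" by simp
      qed
      moreover have "- (x + (real k - 1) / 2) * (x - (real k - 1) / 2) < 0"
      proof -
        have "(x + (real k - 1) / 2) * (x - (real k - 1) / 2) > 0"
        proof (cases "x > (real k - 1) / 2")
          have "real k \<ge> 2" using k by simp
          case True
          have "0 < x + (real k - 1) / 2" using True \<open>real k \<ge> 2\<close> by (simp add: field_simps)
          have "0 < x - (real k - 1) / 2" using True by linarith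
          then show ?thesis using \<open>0 < x + (real k - 1) / 2\<close> by (intro mult_pos_pos)
        next
          case False then have "x < (1 - real k) / 2" using out by auto
          then have "x + (real k - 1) / 2 < 0" "x - (real k - 1) / 2 < 0" using k by (simp_all add: field_simps)
          then show ?thesis by (intro mult_neg_neg)
        qed
        then show ?thesis by (metis minus_mult_left neg_less_0_iff_less)
      qed
      ultimately have "Pk k x < 0" unfolding Pk_def by (simp add: mult_neg_pos)
      then show False using \<open>Pk k x \<ge> 0\<close> by simp
    qed
  next
    assume "(1 - real k) / 2 \<le> x \<and> x \<le> (real k - 1) / 2"
    then have "- (x + (real k - 1) / 2) \<le> 0" "x - (real k - 1) / 2 \<le> 0" by (simp_all add: field_simps)
    then have "- (x + (real k - 1) / 2) * (x - (real k - 1) / 2) \<ge> 0"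
      by (simp add: mult_nonpos_nonpos)
    then show "Pk k x \<ge> 0" unfolding Pk_def using pr by simp
  qed
qed

lemma partA: "k \<ge> 2 \<Longrightarrow> invariant_set (Xk k) (Yk k) (Lambdak k)"
proof -
  assume k: "k \<ge> 2"
  have "Lambdak k = Lam (Pk k)" unfolding Lambdak_def Lam_def using Pk_sign[OF k] by auto
  moreover have "invariant_set (Xk k) (Yk k) (Lam (Pk k))"
    by (rule generic_inv[OF Pk_diff]) (auto simp: Xk_def Yk_def fun_eq_iff)
  ultimately show ?thesis by simp
qed

lemma partB: "invariant_set Xinf Yinf Lambdainf"
proof -
  have d: "(Pinf has_real_derivative 2 * sin (2 * pi * x)) (at x)" for x
    unfolding Pinf_def by (auto intro!: derivative_eq_intros)
  have "Lambdainf = Lam Pinf" unfolding Lambdainf_def Lam_def Pinf_def by auto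
  moreover have "invariant_set Xinf Yinf (Lam Pinf)"
    by (rule generic_inv[OF d]) (auto simp: Xinf_def Yinf_def fun_eq_iff)
  ultimately show ?thesis by simp
qed

theorem mainTheorem10:
  shows "(\<forall>k::nat. k \<ge> 2 \<longrightarrow> invariant_set (Xk k) (Yk k) (Lambdak k))
         \<and> invariant_set Xinf Yinf Lambdainf"
  using partA partB by blast

end
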